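(* Let $m\ge 2$ be an integer and consider a preferential (dynamic) attachment circuit of index $m$. Let $Y_n^{(0)}$ and $Y_n^{(1)}$ be the numbers of nodes of outdegree $0$ and of outdegree $1$ in the circuit after $n$ insertions. Then for every $n\ge 1$, $$\mathbb{E}[Y_n^{(0)}]=\frac{(m+1)n+m}{2m+1},\qquad \mathbb{E}[Y_n^{(1)}]=\frac{(m+1)(n-1)\bigl((2m^2+2m)n+2m^2+m+1\bigr)}{2(3m+1)(2m+1)\bigl((m+1)n-1\bigr)},$$ and consequently, as $n\to\infty$, $\mathbb{E}[Y_n^{(0)}]\sim \frac{m+1}{2m+1}\,n$ and $\mathbb{E}[Y_n^{(1)}]\sim \frac{m(m+1)}{(3m+1)(2m+1)}\,n$.
   Context: Preferential (dynamic) attachment circuit of index $m\ge1$: at time $0$ there is a single node labeled $0$. At each time $n\ge1$ a new node labeled $n$ is added and $m$ parents are chosen for it one at a time, with replacement, among nodes $0,\dots,n-1$. Before the $(i+1)$-th choice ($i=0,\dots,m-1$), each existing node $v$ is chosen with probability $\frac{d_i(v)+1}{\sum_{x}(d_i(x)+1)}$, where $d_i(x)$ is the outdegree of $x$ in the current multigraph, which already includes the edges created by the first $i$ choices for node $n$; after each choice an edge from the chosen parent to node $n$ is immediately added (multiple edges between the same pair are allowed and counted with multiplicity). The outdegree of a node is the number of edges (with multiplicity) going to nodes with larger labels. *)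

theory Defs
  imports "HOL-Probability.Probability" "HOL-Library.Landau_Symbols"
begin

text \<open>A circuit is represented by its multiset of edges (parent, child).
  Multiple edges are allowed and counted with multiplicity.\<close>
type_synonym circuit = "(nat \<times> nat) multiset"

definition outdeg :: "circuit \<Rightarrow> nat \<Rightarrow> nat" where
  "outdeg E v = size (filter_mset (\<lambda>e. fst e = v) E)"

definition choose_parent :: "nat \<Rightarrow> circuit \<Rightarrow> nat pmf" where
  "choose_parent k E =
     pmf_of_multiset (\<Sum>v<k. replicate_mset (outdeg E v + 1) v)"

fun add_edges :: "nat \<Rightarrow> nat \<Rightarrow> circuit \<Rightarrow> circuit pmf" where
  "add_edges 0 k E = return_pmf E"
| "add_edges (Suc i) k E =
     bind_pmf (choose_parent k E) (\<lambda>v. add_edges i k (add_mset (v, k) E))"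

text \<open>Distribution of the circuit of index m after n insertions
  (nodes 0,...,n).\<close>
fun pa_circuit :: "nat \<Rightarrow> nat \<Rightarrow> circuit pmf" where
  "pa_circuit m 0 = return_pmf {#}"
| "pa_circuit m (Suc n) = bind_pmf (pa_circuit m n) (add_edges m (Suc n))"

definition num_outdeg :: "nat \<Rightarrow> nat \<Rightarrow> circuit \<Rightarrow> nat" where
  "num_outdeg d n E = card {v. v \<le> n \<and> outdeg E v = d}"

definition EY :: "nat \<Rightarrow> nat \<Rightarrow> nat \<Rightarrow> real" where
  "EY m d n = measure_pmf.expectation (pa_circuit m n) (\<lambda>E. real (num_outdeg d n E))"

end

theory Submission imports Defs begin

definition cnt :: "nat \<Rightarrow> nat \<Rightarrow> circuit \<Rightarrow> real" where
  "cnt d k E = (\<Sum>v<k. of_bool (outdeg E v = d))"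

definition tw :: "nat \<Rightarrow> circuit \<Rightarrow> real" where
  "tw k E = (\<Sum>v<k. real (outdeg E v) + 1)"

lemma outdeg_add: "outdeg (add_mset (v,k) E) w = outdeg E w + (if w = v then 1 else 0)"
  by (auto simp: outdeg_def)

lemma sum_split_at:
  fixes f :: "nat \<Rightarrow> real"
  assumes "v < k"
  shows "(\<Sum>w<k. f w) = f v + (\<Sum>w\<in>{..<k}-{v}. f w)"
  using assms by (simp add: sum.remove)

lemma cnt_add:
  assumes "v < k"
  shows "cnt d k (add_mset (v,k) E) = cnt d k E + of_bool (outdeg E v + 1 = d) - of_bool (outdeg E v = d)"
proof -
  have "cnt d k (add_mset (v,k) E) = of_bool (outdeg E v + 1 = d) + (\<Sum>w\<in>{..<k}-{v}. of_bool (outdeg E w = d))"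
    unfolding cnt_def using assms
    by (subst sum_split_at[OF assms]) (auto simp: outdeg_add intro!: sum.cong)
  moreover have "cnt d k E = of_bool (outdeg E v = d) + (\<Sum>w\<in>{..<k}-{v}. of_bool (outdeg E w = d))"
    unfolding cnt_def by (rule sum_split_at[OF assms])
  ultimately show ?thesis by simp
qed

lemma tw_add:
  assumes "v < k"
  shows "tw k (add_mset (v,k) E) = tw k E + 1"
proof -
  have "tw k (add_mset (v,k) E) = (real (outdeg E v) + 2) + (\<Sum>w\<in>{..<k}-{v}. real (outdeg E w) + 1)"
    unfolding tw_def using assms
    by (subst sum_split_at[OF assms]) (auto simp: outdeg_add intro!: sum.cong)
  moreover have "tw k E = (real (outdeg E v) + 1) + (\<Sum>w\<in>{..<k}-{v}. real (outdeg E w) + 1)"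
    unfolding tw_def by (rule sum_split_at[OF assms])
  ultimately show ?thesis by simp
qed

lemma tw_pos: "k > 0 \<Longrightarrow> tw k E > 0"
  unfolding tw_def by (intro sum_pos) auto

definition pm :: "nat \<Rightarrow> circuit \<Rightarrow> nat multiset" where
  "pm k E = (\<Sum>v<k. replicate_mset (outdeg E v + 1) v)"

lemma size_pm: "real (size (pm k E)) = tw k E"
  unfolding pm_def tw_def by (induction k) auto

lemma count_pm: "a < k \<Longrightarrow> count (pm k E) a = outdeg E a + 1"
  unfolding pm_def count_sum by (simp add: count_replicate_mset if_distrib sum.delta cong: if_cong)

lemma set_pm: "set_mset (pm k E) \<subseteq> {..<k}"
  unfolding pm_def by (induction k) auto

lemma pm_ne: "k > 0 \<Longrightarrow> pm k E \<noteq> {#}"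
  using size_pm[of k E] tw_pos[of k E] by auto

lemma pmf_choose: "a < k \<Longrightarrow> pmf (choose_parent k E) a = (real (outdeg E a) + 1) / tw k E"
  unfolding choose_parent_def pm_def[symmetric]
  using pm_ne[of k E] size_pm[of k E] count_pm[of a k E] by simp

lemma set_choose: "k > 0 \<Longrightarrow> set_pmf (choose_parent k E) \<subseteq> {..<k}"
  unfolding choose_parent_def pm_def[symmetric] using pm_ne[of k E] set_pm by simp

lemma finite_add_edges: "k > 0 \<Longrightarrow> finite (set_pmf (add_edges i k E))"
proof (induction i arbitrary: E)
  case 0 then show ?case by simp
next
  case (Suc i)
  show ?case using Suc set_choose[of k E] by (auto intro: finite_subset)
qed

lemma exp_add_edges_Suc:
  assumes "k > 0"
  shows "measure_pmf.expectation (add_edges (Suc i) k E) (h :: circuit \<Rightarrow> real) =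
     (\<Sum>v<k. (real (outdeg E v) + 1) * measure_pmf.expectation (add_edges i k (add_mset (v,k) E)) h) / tw k E"
  using assms
  by (simp add: pmf_expectation_bind[where A="{..<k}"] finite_add_edges set_choose pmf_choose
      sum_divide_distrib)

lemma sum_w: "(\<Sum>v<k. (real (outdeg E v) + 1)) = tw k E" by (simp add: tw_def)

lemma sum_w0: "(\<Sum>v<k. (real (outdeg E v) + 1) * of_bool (outdeg E v = 0)) = cnt 0 k E"
  unfolding cnt_def by (intro sum.cong) auto

lemma sum_w1: "(\<Sum>v<k. (real (outdeg E v) + 1) * of_bool (outdeg E v = 1)) = 2 * cnt 1 k E"
  unfolding cnt_def sum_distrib_left by (intro sum.cong) auto

lemma sum_w01: "(\<Sum>v<k. (real (outdeg E v) + 1) * of_bool (outdeg E v + 1 = 1)) = cnt 0 k E"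
  unfolding cnt_def by (intro sum.cong) auto

lemma sum_w00: "(\<Sum>v<k. (real (outdeg E v) + 1) * of_bool (outdeg E v + 1 = 0)) = 0"
  by simp

lemma exp_cnt0:
  assumes "k > 0"
  shows "measure_pmf.expectation (add_edges i k E) (cnt 0 k) * (tw k E + real i - 1)
         = cnt 0 k E * (tw k E - 1)"
  using assms
proof (induction i arbitrary: E)
  case 0 then show ?case by simp
next
  case (Suc i)
  let ?T = "tw k E"
  have IH: "measure_pmf.expectation (add_edges i k (add_mset (v,k) E)) (cnt 0 k) * (?T + real i)
      = cnt 0 k (add_mset (v,k) E) * ?T" if "v < k" for v
    using Suc.IH[OF assms, of "add_mset (v,k) E"] tw_add[OF that, of E] by (simp add: algebra_simps)
  have "measure_pmf.expectation (add_edges (Suc i) k E) (cnt 0 k) * (?T + real (Suc i) - 1)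
     = (\<Sum>v<k. (real (outdeg E v) + 1) * (measure_pmf.expectation (add_edges i k (add_mset (v,k) E)) (cnt 0 k) * (?T + real i))) / ?T"
    by (subst exp_add_edges_Suc[OF assms]) (simp add: sum_divide_distrib sum_distrib_left mult_ac)
  also have "\<dots> = (\<Sum>v<k. (real (outdeg E v) + 1) * (cnt 0 k (add_mset (v,k) E))) "
    using tw_pos[OF assms, of E] by (simp add: IH sum_divide_distrib[symmetric] sum_distrib_right[symmetric] mult.assoc[symmetric])
  also have "\<dots> = (\<Sum>v<k. (real (outdeg E v) + 1) * cnt 0 k E + (real (outdeg E v) + 1) * of_bool (outdeg E v + 1 = 0)
        - (real (outdeg E v) + 1) * of_bool (outdeg E v = 0))"
    by (intro sum.cong refl) (simp add: cnt_add algebra_simps)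
  also have "\<dots> = cnt 0 k E * (?T - 1)"
    by (simp only: sum_subtractf sum.distrib sum_w0 sum_w00 sum_distrib_right[symmetric] sum_w) (simp add: algebra_simps tw_def sum.distrib)
  finally show ?case .
qed

lemma sum_wc0: "(\<Sum>v<k. (real (outdeg E v) + 1) * (cnt 0 k (add_mset (v,k) E))) = cnt 0 k E * (tw k E - 1)"
proof -
  have "(\<Sum>v<k. (real (outdeg E v) + 1) * (cnt 0 k (add_mset (v,k) E))) = (\<Sum>v<k. (real (outdeg E v) + 1) * cnt 0 k E + (real (outdeg E v) + 1) * of_bool (outdeg E v + 1 = 0)
        - (real (outdeg E v) + 1) * of_bool (outdeg E v = 0))"
    by (intro sum.cong refl) (simp add: cnt_add algebra_simps)
  also have "\<dots> = cnt 0 k E * (tw k E - 1)"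
    by (simp only: sum_subtractf sum.distrib sum_w0 sum_w00 sum_distrib_right[symmetric] sum_w) (simp add: algebra_simps tw_def sum.distrib)
  finally show ?thesis .
qed

lemma sum_wc1: "(\<Sum>v<k. (real (outdeg E v) + 1) * (cnt 1 k (add_mset (v,k) E))) = cnt 1 k E * tw k E + cnt 0 k E - 2 * cnt 1 k E"
proof -
  have "(\<Sum>v<k. (real (outdeg E v) + 1) * (cnt 1 k (add_mset (v,k) E))) = (\<Sum>v<k. (real (outdeg E v) + 1) * cnt 1 k E + (real (outdeg E v) + 1) * of_bool (outdeg E v + 1 = 1)
        - (real (outdeg E v) + 1) * of_bool (outdeg E v = 1))"
    by (intro sum.cong refl) (simp add: cnt_add algebra_simps)
  also have "\<dots> = cnt 1 k E * tw k E + cnt 0 k E - 2 * cnt 1 k E"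
    by (simp only: sum_subtractf sum.distrib sum_w1 sum_w01 sum_distrib_right[symmetric] sum_w) (simp add: algebra_simps tw_def sum.distrib)
  finally show ?thesis .
qed

lemma exp_cnt1:
  assumes "k > 0"
  shows "measure_pmf.expectation (add_edges i k E) (cnt 1 k) * (tw k E + real i - 1) * (tw k E + real i - 2)
         = cnt 1 k E * (tw k E - 1) * (tw k E - 2) + real i * cnt 0 k E * (tw k E - 1)"
  using assms
proof (induction i arbitrary: E)
  case 0 then show ?case by simp
next
  case (Suc i)
  let ?T = "tw k E"
  let ?X = "\<lambda>v. measure_pmf.expectation (add_edges i k (add_mset (v,k) E)) (cnt 1 k)"
  have IH: "?X v * ((?T + real i) * (?T + real i - 1))
      = cnt 1 k (add_mset (v,k) E) * ?T * (?T - 1) + real i * cnt 0 k (add_mset (v,k) E) * ?T" if "v < k" for v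
    using Suc.IH[OF assms, of "add_mset (v,k) E"] tw_add[OF that, of E] by (simp add: algebra_simps)
  have "measure_pmf.expectation (add_edges (Suc i) k E) (cnt 1 k) * (?T + real (Suc i) - 1) * (?T + real (Suc i) - 2)
     = (\<Sum>v<k. (real (outdeg E v) + 1) * (?X v * ((?T + real i) * (?T + real i - 1)))) / ?T"
    by (subst exp_add_edges_Suc[OF assms]) (simp add: sum_divide_distrib sum_distrib_left mult_ac)
  also have "\<dots> = (\<Sum>v<k. (real (outdeg E v) + 1) * (cnt 1 k (add_mset (v,k) E) * ?T * (?T - 1) + real i * cnt 0 k (add_mset (v,k) E) * ?T)) / ?T"
    by (rule arg_cong[where f="\<lambda>x. x / ?T"], rule sum.cong[OF refl]) (simp only: IH lessThan_iff)
  also have "\<dots> = (\<Sum>v<k. ((real (outdeg E v) + 1) * cnt 1 k (add_mset (v,k) E)) * (?T - 1) + real i * ((real (outdeg E v) + 1) * cnt 0 k (add_mset (v,k) E)))"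
    unfolding sum_divide_distrib using tw_pos[OF assms, of E] by (intro sum.cong refl) (simp add: field_simps)
  also have "\<dots> = (cnt 1 k E * tw k E + cnt 0 k E - 2 * cnt 1 k E) * (?T - 1) + real i * (cnt 0 k E * (tw k E - 1))"
    by (simp only: sum.distrib sum_distrib_right[symmetric] sum_distrib_left[symmetric] sum_wc0 sum_wc1)
  also have "\<dots> = cnt 1 k E * (?T - 1) * (?T - 2) + real (Suc i) * cnt 0 k E * (?T - 1)"
    by (simp add: algebra_simps)
  finally show ?case .
qed

lemma add_edges_set:
  "k > 0 \<Longrightarrow> x \<in> set_pmf (add_edges i k E) \<Longrightarrow>
     size x = size E + i \<and> (\<forall>e\<in>#x. e \<in># E \<or> (fst e < k \<and> snd e = k))"
proof (induction i arbitrary: E)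
  case 0 then show ?case by simp
next
  case (Suc i)
  then obtain v where v: "v \<in> set_pmf (choose_parent k E)" and x: "x \<in> set_pmf (add_edges i k (add_mset (v,k) E))"
    by auto
  have "v < k" using v set_choose[OF Suc.prems(1)] by auto
  show ?case using Suc.IH[OF Suc.prems(1) x] \<open>v < k\<close> by auto
qed

lemma finite_pa: "finite (set_pmf (pa_circuit m n))"
  by (induction n) (auto simp: finite_add_edges)

lemma pa_inv: "E \<in> set_pmf (pa_circuit m n) \<Longrightarrow> size E = m*n \<and> (\<forall>e\<in>#E. fst e < snd e \<and> snd e \<le> n)"
proof (induction n arbitrary: E)
  case 0 then show ?case by simp
next
  case (Suc n)
  then obtain F where F: "F \<in> set_pmf (pa_circuit m n)" and E: "E \<in> set_pmf (add_edges m (Suc n) F)" by auto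
  from add_edges_set[OF _ E] Suc.IH[OF F] show ?case by fastforce
qed

lemma sum_outdeg: "(\<forall>e\<in>#E. fst e < k) \<Longrightarrow> (\<Sum>v<k. outdeg E v) = size E"
proof (induction E)
  case empty then show ?case by (simp add: outdeg_def)
next
  case (add e E)
  have "outdeg (add_mset e E) v = outdeg E v + (if v = fst e then 1 else 0)" for v
    by (auto simp: outdeg_def)
  then show ?case using add by (simp add: sum.distrib)
qed

lemma outdeg_none: "(\<forall>e\<in>#E. fst e \<noteq> v) \<Longrightarrow> outdeg E v = 0"
  unfolding outdeg_def by simp

lemma num_cnt: "real (num_outdeg d n E) = cnt d (Suc n) E"
proof -
  have "{v. v \<le> n \<and> outdeg E v = d} = {..<Suc n} \<inter> {v. outdeg E v = d}" by auto
  moreover have "(\<Sum>v<Suc n. of_bool (outdeg E v = d)) = real (card ({..<Suc n} \<inter> {v. outdeg E v = d}))"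
    by (rule sum_of_bool_eq) auto
  ultimately show ?thesis unfolding num_outdeg_def cnt_def by metis
qed

lemma num_cnt_Suc: "outdeg E (Suc n) = 0 \<Longrightarrow> real (num_outdeg d (Suc n) E) = cnt d (Suc n) E + of_bool (d = 0)"
  unfolding num_cnt cnt_def by auto

lemma exp_cong: "finite (set_pmf p) \<Longrightarrow> (\<And>x. x \<in> set_pmf p \<Longrightarrow> f x = g x) \<Longrightarrow>
   measure_pmf.expectation p f = measure_pmf.expectation p (g :: _ \<Rightarrow> real)"
  by (subst (1 2) integral_measure_pmf[of "set_pmf p"]) auto

lemma exp_add_const: "finite (set_pmf p) \<Longrightarrow> measure_pmf.expectation p (\<lambda>x. f x + c) = measure_pmf.expectation p f + (c::real)"
  by (subst Bochner_Integration.integral_add) (auto intro: integrable_measure_pmf_finite)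

lemma exp_lin2: "finite (set_pmf p) \<Longrightarrow> measure_pmf.expectation p (\<lambda>x. a * f x + b * g x) = a * measure_pmf.expectation p f + (b::real) * measure_pmf.expectation p g"
  by (subst Bochner_Integration.integral_add) (auto intro: integrable_measure_pmf_finite)

lemma exp_bind: "finite (set_pmf p) \<Longrightarrow> (\<And>x. x \<in> set_pmf p \<Longrightarrow> finite (set_pmf (f x))) \<Longrightarrow>
   measure_pmf.expectation (bind_pmf p f) h = measure_pmf.expectation p (\<lambda>x. measure_pmf.expectation (f x) (h :: _ \<Rightarrow> real))"
  by (subst pmf_expectation_bind[where A="set_pmf p"]) (auto simp: integral_measure_pmf[of "set_pmf p"])

lemma tw_pa: "E \<in> set_pmf (pa_circuit m n) \<Longrightarrow> tw (Suc n) E = (real m + 1) * real n + 1"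
proof -
  assume E: "E \<in> set_pmf (pa_circuit m n)"
  have "(\<Sum>v<Suc n. outdeg E v) = m * n" using pa_inv[OF E] by (subst sum_outdeg) auto
  then have "(\<Sum>v<Suc n. real (outdeg E v)) = real m * real n" by (metis of_nat_mult of_nat_sum)
  then show ?thesis unfolding tw_def by (simp add: sum.distrib algebra_simps)
qed

lemma outdeg_new: "E \<in> set_pmf (pa_circuit m n) \<Longrightarrow> x \<in> set_pmf (add_edges i (Suc n) E) \<Longrightarrow> outdeg x (Suc n) = 0"
  using pa_inv[of E m n] add_edges_set[of "Suc n" x i E] by (intro outdeg_none) fastforce

lemma rec0:
  assumes "m \<ge> 1"
  shows "EY m 0 (Suc n) = EY m 0 n * ((real m + 1) * real n) / ((real m + 1) * real n + real m) + 1"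
proof -
  have inner: "measure_pmf.expectation (add_edges m (Suc n) E) (\<lambda>x. real (num_outdeg 0 (Suc n) x))
     = real (num_outdeg 0 n E) * ((real m + 1) * real n) / ((real m + 1) * real n + real m) + 1"
    if E: "E \<in> set_pmf (pa_circuit m n)" for E
  proof -
    have "measure_pmf.expectation (add_edges m (Suc n) E) (\<lambda>x. real (num_outdeg 0 (Suc n) x))
       = measure_pmf.expectation (add_edges m (Suc n) E) (\<lambda>x. cnt 0 (Suc n) x + 1)"
      by (rule exp_cong) (auto simp: finite_add_edges num_cnt_Suc outdeg_new[OF E])
    also have "\<dots> = measure_pmf.expectation (add_edges m (Suc n) E) (cnt 0 (Suc n)) + 1"
      by (simp add: exp_add_const finite_add_edges)
    also have "measure_pmf.expectation (add_edges m (Suc n) E) (cnt 0 (Suc n)) = 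
        real (num_outdeg 0 n E) * ((real m + 1) * real n) / ((real m + 1) * real n + real m)"
    proof -
      have pos: "(real m + 1) * real n + real m > 0" using assms by (simp add: add_nonneg_pos)
      have "measure_pmf.expectation (add_edges m (Suc n) E) (cnt 0 (Suc n)) * ((real m + 1) * real n + real m)
         = cnt 0 (Suc n) E * ((real m + 1) * real n)"
        using exp_cnt0[of "Suc n" m E] tw_pa[OF E] by (simp add: algebra_simps)
      then show ?thesis using pos by (simp add: num_cnt field_simps)
    qed
    finally show ?thesis .
  qed
  have "EY m 0 (Suc n) = measure_pmf.expectation (pa_circuit m n)
      (\<lambda>E. real (num_outdeg 0 n E) * ((real m + 1) * real n) / ((real m + 1) * real n + real m) + 1)"
    unfolding EY_def by (simp add: exp_bind finite_pa finite_add_edges del: of_nat_add of_nat_mult, rule exp_cong)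
      (auto simp: finite_pa inner)
  also have "\<dots> = EY m 0 n * ((real m + 1) * real n) / ((real m + 1) * real n + real m) + 1"
    unfolding EY_def by (simp add: exp_add_const finite_pa)
  finally show ?thesis .
qed

lemma rec1:
  assumes "m \<ge> 2"
  shows "EY m 1 (Suc n) = (EY m 1 n * (((real m + 1) * real n) * ((real m + 1) * real n - 1))
      + EY m 0 n * (real m * ((real m + 1) * real n)))
      / (((real m + 1) * real n + real m) * ((real m + 1) * real n + real m - 1))"
proof -
  define D where "D = ((real m + 1) * real n + real m) * ((real m + 1) * real n + real m - 1)"
  have "(real m + 1) * real n \<ge> 0" by simp
  moreover have "real m \<ge> 2" using assms by simp
  ultimately have pos: "D > 0" unfolding D_def
    by (intro mult_pos_pos) linarith+
  have inner: "measure_pmf.expectation (add_edges m (Suc n) E) (\<lambda>x. real (num_outdeg 1 (Suc n) x))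
     = (((real m + 1) * real n) * ((real m + 1) * real n - 1)) / D * real (num_outdeg 1 n E)
       + (real m * ((real m + 1) * real n)) / D * real (num_outdeg 0 n E)"
    if E: "E \<in> set_pmf (pa_circuit m n)" for E
  proof -
    have e1: "measure_pmf.expectation (add_edges m (Suc n) E) (\<lambda>x. real (num_outdeg 1 (Suc n) x))
       = measure_pmf.expectation (add_edges m (Suc n) E) (cnt 1 (Suc n))"
      by (rule exp_cong) (auto simp: finite_add_edges num_cnt_Suc outdeg_new[OF E])
    have e2: "measure_pmf.expectation (add_edges m (Suc n) E) (cnt 1 (Suc n)) * D = cnt 1 (Suc n) E * (((real m + 1) * real n) * ((real m + 1) * real n - 1))
        + cnt 0 (Suc n) E * (real m * ((real m + 1) * real n))"
      using exp_cnt1[of "Suc n" m E] tw_pa[OF E] unfolding D_def by (simp add: algebra_simps)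
    have e3: "measure_pmf.expectation (add_edges m (Suc n) E) (cnt 1 (Suc n)) = (cnt 1 (Suc n) E * (((real m + 1) * real n) * ((real m + 1) * real n - 1))
        + cnt 0 (Suc n) E * (real m * ((real m + 1) * real n))) / D"
      using e2 pos by (simp add: eq_divide_eq)
    show ?thesis unfolding e1 e3 by (simp add: num_cnt add_divide_distrib mult_ac)
  qed
  have "EY m 1 (Suc n) = measure_pmf.expectation (pa_circuit m n)
      (\<lambda>E. (((real m + 1) * real n) * ((real m + 1) * real n - 1)) / D * real (num_outdeg 1 n E)
       + (real m * ((real m + 1) * real n)) / D * real (num_outdeg 0 n E))"
    unfolding EY_def by (simp add: exp_bind finite_pa finite_add_edges del: of_nat_add of_nat_mult, rule exp_cong)
      (auto simp: finite_pa inner[simplified])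
  also have "\<dots> = (((real m + 1) * real n) * ((real m + 1) * real n - 1)) / D * EY m 1 n
       + (real m * ((real m + 1) * real n)) / D * EY m 0 n"
    unfolding EY_def by (rule exp_lin2[OF finite_pa])
  finally show ?thesis unfolding D_def[symmetric] by (simp add: add_divide_distrib mult_ac)
qed

lemma EY0_0: "EY m 0 0 = 1" and EY1_0: "EY m 1 0 = 0"
  by (simp_all add: EY_def num_outdeg_def outdeg_def)


lemma lin_equiv:
  fixes a b :: real
  assumes "a \<noteq> 0"
  shows "(\<lambda>n::nat. a * real n + b) \<sim>[sequentially] (\<lambda>n. a * real n)"
proof (rule asymp_equivI')
  have "(\<lambda>n::nat. 1 + (b / a) / real n) \<longlonglongrightarrow> 1 + 0"
    by (intro tendsto_add tendsto_const lim_const_over_n)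
  moreover have "eventually (\<lambda>n::nat. 1 + (b / a) / real n = (a * real n + b) / (a * real n)) sequentially"
    using eventually_ge_at_top[of "1::nat"] by eventually_elim (use assms in \<open>simp add: field_simps\<close>)
  ultimately show "(\<lambda>n::nat. (a * real n + b) / (a * real n)) \<longlonglongrightarrow> 1"
    by (simp add: Lim_transform_eventually)
qed

lemma alg1:
  fixes M x :: real
  assumes M: "M \<ge> 2" and x: "x \<ge> 1"
  defines "f0 \<equiv> \<lambda>x. ((M + 1) * x + M) / (2 * M + 1)"
  defines "f1 \<equiv> \<lambda>x. (M + 1) * (x - 1) * ((2 * M^2 + 2 * M) * x + 2 * M^2 + M + 1)
                 / (2 * (3 * M + 1) * (2 * M + 1) * ((M + 1) * x - 1))"
  shows "f1 (x + 1) = (f1 x * (((M + 1) * x) * ((M + 1) * x - 1)) + f0 x * (M * ((M + 1) * x)))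
      / (((M + 1) * x + M) * ((M + 1) * x + M - 1))"
proof -
  have q: "(M + 1) * x \<ge> M + 1" using mult_left_mono[of 1 x "M+1"] x M by simp
  have p1: "(M + 1) * x - 1 > 0" using q M by linarith
  have p2: "(M + 1) * (x + 1) - 1 > 0" using q M by (simp add: algebra_simps)
  have p3: "(M + 1) * x + M - 1 > 0" using p1 M by linarith
  have p4: "(M + 1) * x + M > 0" using p1 M by linarith
  have p5: "3 * M + 1 > 0" "2 * M + 1 > 0" using M by auto
  define A where "A = M + 1"
  define P where "P = 2 * M^2 + 2 * M"
  define Q where "Q = 2 * M^2 + M + 1"
  define K where "K = 2 * (3 * M + 1) * (2 * M + 1)"
  have K: "K > 0" using p5 unfolding K_def by simp
  have u: "A * x - 1 > 0" using p1 unfolding A_def .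
  have v: "A * x + M > 0" "A * x + M - 1 > 0" using p3 p4 unfolding A_def by auto
  have L: "f1 (x + 1) = A * x * (P * (x + 1) + Q) / (K * (A * x + M))"
    unfolding f1_def A_def P_def Q_def K_def by (simp add: algebra_simps)
  have f1x: "f1 x = (A * (x - 1) * (P * x + Q)) / (K * (A * x - 1))"
    unfolding f1_def A_def P_def Q_def K_def by simp
  have canc: "\<And>N K u a :: real. u \<noteq> 0 \<Longrightarrow> N / (K * u) * (a * u) = N * a / K"
    by (simp add: field_simps)
  have R1: "f1 x * ((A * x) * (A * x - 1)) = A * (x - 1) * (P * x + Q) * (A * x) / K"
    unfolding f1x using u by (intro canc) simp
  have R2: "f0 x * (M * (A * x)) = (2 * (3 * M + 1)) * ((A * x + M) * M * (A * x)) / K"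
  proof -
    have f0x: "f0 x = (A * x + M) / (2 * M + 1)" unfolding f0_def A_def ..
    have "(2 * (3 * M + 1)) * ((A * x + M) * M * (A * x)) / K = ((A * x + M) * M * (A * x)) / (2 * M + 1)"
      unfolding K_def using p5 by (intro mult_divide_mult_cancel_left) simp
    then show ?thesis unfolding f0x by simp
  qed
  have poly: "A * x * (P * (x + 1) + Q) * (A * x + M - 1) = A * (x - 1) * (P * x + Q) * (A * x) + (2 * (3 * M + 1)) * ((A * x + M) * M * (A * x))"
    unfolding A_def P_def Q_def by (simp add: algebra_simps power2_eq_square)
  have "(f1 x * (((M + 1) * x) * ((M + 1) * x - 1)) + f0 x * (M * ((M + 1) * x)))
      / (((M + 1) * x + M) * ((M + 1) * x + M - 1))
      = (A * (x - 1) * (P * x + Q) * (A * x) + (2 * (3 * M + 1)) * ((A * x + M) * M * (A * x))) / (K * ((A * x + M) * (A * x + M - 1)))"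
    unfolding A_def[symmetric] R1 R2 using K by (simp add: add_divide_distrib)
  also have "\<dots> = A * x * (P * (x + 1) + Q) / (K * (A * x + M))"
  proof -
    have g: "\<And>N K v w :: real. w \<noteq> 0 \<Longrightarrow> N * w / (K * (v * w)) = N / (K * v)"
      by simp
    show ?thesis unfolding poly[symmetric] using v by (intro g) simp
  qed
  finally show ?thesis using L by simp
qed

theorem proposition1:
  fixes m :: nat
  assumes "m \<ge> 2"
  shows "(\<forall>n\<ge>1. EY m 0 n = ((real m + 1) * real n + real m) / (2 * real m + 1)
            \<and> EY m 1 n = (real m + 1) * (real n - 1)
                 * ((2 * (real m)^2 + 2 * real m) * real n + 2 * (real m)^2 + real m + 1)
                 / (2 * (3 * real m + 1) * (2 * real m + 1) * ((real m + 1) * real n - 1)))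
       \<and> (\<lambda>n. EY m 0 n) \<sim>[at_top] (\<lambda>n. (real m + 1) / (2 * real m + 1) * real n)
       \<and> (\<lambda>n. EY m 1 n) \<sim>[at_top]
            (\<lambda>n. real m * (real m + 1) / ((3 * real m + 1) * (2 * real m + 1)) * real n)"
proof -
  define M where "M = real m"
  have M2: "M \<ge> 2" using assms unfolding M_def by simp
  define f0 where "f0 = (\<lambda>x. ((M + 1) * x + M) / (2 * M + 1))"
  define f1 where "f1 = (\<lambda>x. (M + 1) * (x - 1) * ((2 * M^2 + 2 * M) * x + 2 * M^2 + M + 1)
                 / (2 * (3 * M + 1) * (2 * M + 1) * ((M + 1) * x - 1)))"
  have closed: "EY m 0 n = f0 (real n) \<and> EY m 1 n = f1 (real n)" if "n \<ge> 1" for n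
    using that
  proof (induction n rule: dec_induct)
    case base
    have "EY m 0 1 = 1" using rec0[of m 0] assms by (simp add: EY0_0)
    moreover have "EY m 1 1 = 0" using rec1[of m 0] assms by (simp add: EY0_0 EY1_0)
    ultimately show ?case unfolding f0_def f1_def using M2 by simp
  next
    case (step n)
    have x: "real n \<ge> 1" using step.hyps by simp
    have pos: "(M + 1) * real n + M > 0" using M2 x by (simp add: add_nonneg_pos)
    have "EY m 0 (Suc n) = f0 (real n) * ((M + 1) * real n) / ((M + 1) * real n + M) + 1"
      using rec0[of m n] assms step.IH unfolding M_def by simp
    also have "\<dots> = ((M + 1) * real n) / (2 * M + 1) + 1"
      unfolding f0_def using pos by simp
    also have "\<dots> = f0 (real (Suc n))"
      unfolding f0_def using M2 by (simp add: field_simps)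
    finally have e0: "EY m 0 (Suc n) = f0 (real (Suc n))" .
    have "EY m 1 (Suc n) = (f1 (real n) * (((M + 1) * real n) * ((M + 1) * real n - 1))
      + f0 (real n) * (M * ((M + 1) * real n)))
      / (((M + 1) * real n + M) * ((M + 1) * real n + M - 1))"
      using rec1[OF assms, of n] step.IH unfolding M_def by simp
    also have "\<dots> = f1 (real n + 1)"
      using alg1[OF M2 x] unfolding f0_def f1_def by simp
    finally show ?case using e0 by (simp add: add.commute)
  qed
  have part1: "\<forall>n\<ge>1. EY m 0 n = ((real m + 1) * real n + real m) / (2 * real m + 1)
            \<and> EY m 1 n = (real m + 1) * (real n - 1)
                 * ((2 * (real m)^2 + 2 * real m) * real n + 2 * (real m)^2 + real m + 1)
                 / (2 * (3 * real m + 1) * (2 * real m + 1) * ((real m + 1) * real n - 1))"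
    using closed unfolding f0_def f1_def M_def by simp
  have ev: "eventually (\<lambda>n::nat. n \<ge> 1) at_top" by (rule eventually_ge_at_top)
  have as0: "(\<lambda>n. EY m 0 n) \<sim>[at_top] (\<lambda>n. (real m + 1) / (2 * real m + 1) * real n)"
  proof -
    have "(\<lambda>n. EY m 0 n) \<sim>[at_top] (\<lambda>n. (M + 1) / (2 * M + 1) * real n + M / (2 * M + 1))"
    proof (rule asymp_equiv_refl_ev, use ev in eventually_elim)
      case (elim n)
      have "EY m 0 n = ((M + 1) * real n + M) / (2 * M + 1)" using closed[OF elim] unfolding f0_def by simp
      also have "\<dots> = (M + 1) / (2 * M + 1) * real n + M / (2 * M + 1)" by (simp only: add_divide_distrib[of "(M + 1) * real n" M] times_divide_eq_left)
      finally show ?case .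
    qed
    also have "\<dots> \<sim>[at_top] (\<lambda>n. (M + 1) / (2 * M + 1) * real n)"
      by (rule lin_equiv) (use M2 in simp)
    finally show ?thesis unfolding M_def .
  qed
  have as1: "(\<lambda>n. EY m 1 n) \<sim>[at_top]
            (\<lambda>n. real m * (real m + 1) / ((3 * real m + 1) * (2 * real m + 1)) * real n)"
  proof -
    define c where "c = (M + 1) / (2 * (3 * M + 1) * (2 * M + 1))"
    define P where "P = 2 * M^2 + 2 * M"
    define Q where "Q = 2 * M^2 + M + 1"
    have Pnz: "P \<noteq> 0" unfolding P_def using M2 by (smt (verit) zero_le_power2)
    have "(\<lambda>n. EY m 1 n) \<sim>[at_top] (\<lambda>n. c * ((1 * real n + (-1)) * (P * real n + Q) / ((M + 1) * real n + (-1))))"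
      by (rule asymp_equiv_refl_ev, use ev in eventually_elim)
        (use closed in \<open>simp add: f1_def c_def P_def Q_def\<close>)
    also have "\<dots> \<sim>[at_top] (\<lambda>n. c * ((1 * real n) * (P * real n) / ((M + 1) * real n)))"
      using M2 Pnz
      by (intro asymp_equiv_mult asymp_equiv_divide asymp_equiv_refl lin_equiv)
         (simp_all add: add_pos_pos)
    also have "\<dots> \<sim>[at_top] (\<lambda>n. M * (M + 1) / ((3 * M + 1) * (2 * M + 1)) * real n)"
    proof (rule asymp_equiv_refl_ev, use ev in eventually_elim)
      case (elim n)
      have "real n > 0" using elim by simp
      have a: "(1 * real n) * (P * real n) = ((M + 1) * real n) * (2 * M * real n)"
        unfolding P_def by (simp add: algebra_simps power2_eq_square)
      have b: "(M + 1) * real n \<noteq> 0" using M2 \<open>real n > 0\<close> by simp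
      have d: "2 * (3 * M + 1) * (2 * M + 1) \<noteq> 0" "(3 * M + 1) * (2 * M + 1) \<noteq> 0" using M2 by auto
      have "c * ((1 * real n) * (P * real n) / ((M + 1) * real n)) = c * (2 * M * real n)"
        unfolding a using b by simp
      also have "\<dots> = M * (M + 1) / ((3 * M + 1) * (2 * M + 1)) * real n"
        unfolding c_def times_divide_eq_left
        by (subst frac_eq_eq[OF d]) (simp add: algebra_simps)
      finally show ?case .
    qed
    finally show ?thesis unfolding M_def .
  qed
  show ?thesis using part1 as0 as1 by blast
qed

end
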